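(* Let $n$ be a positive integer and let $\alpha,\beta,\gamma,\delta: \mathcal{P}(n) \to [0,\infty)$ satisfy \[ \alpha(A)\beta(B) \leq \gamma(A \cup B)\,\delta(A \cap B) \quad \text{for all } A,B \in \mathcal{P}(n). \] Then \[ \sum_{A \in \mathcal{P}(n)}\alpha(A)\beta(A^c) \leq \sum_{C \in \mathcal{P}(n)}\gamma(C)\delta(C^c). \]
   Context: $[n]=\{1,\dots,n\}$, $\mathcal{P}(n)$ denotes the power set of $[n]$, and $A^c = [n]\setminus A$ denotes the complement of $A$ in $[n]$. *)

theory Defs
  imports Complex_Main
begin

end

theory Submission
  imports Defs
begin

lemma four_aux:
  fixes a0 a1 b0 b1 c0 c1 d0 d1 :: real
  assumes nn: "a0 \<ge> 0" "a1 \<ge> 0" "b0 \<ge> 0" "b1 \<ge> 0" "c0 \<ge> 0" "c1 \<ge> 0" "d0 \<ge> 0" "d1 \<ge> 0"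
    and h00: "a0 * b0 \<le> c0 * d0" and h01: "a0 * b1 \<le> c1 * d0"
    and h10: "a1 * b0 \<le> c1 * d0" and h11: "a1 * b1 \<le> c1 * d1"
  shows "(a0 + a1) * (b0 + b1) \<le> (c0 + c1) * (d0 + d1)"
proof -
  have cross: "a0 * b1 + a1 * b0 \<le> c1 * d0 + c0 * d1"
  proof (cases "c1 * d0 = 0")
    case True
    then have "a0 * b1 = 0" "a1 * b0 = 0" using h01 h10 nn
      by (metis antisym mult_nonneg_nonneg)+
    then have z: "a0 * b1 + a1 * b0 = 0" by (simp only: add_0)
    have "c1 * d0 + c0 * d1 \<ge> 0" using nn by (simp add: add_nonneg_nonneg mult_nonneg_nonneg)
    then show ?thesis using z by linarith
  next
    case False
    define w where "w = c1 * d0"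
    have wp: "w > 0" using False nn unfolding w_def by (simp add: less_le)
    have p: "(w - a0 * b1) * (w - a1 * b0) \<ge> 0"
      using h01 h10 unfolding w_def by (intro mult_nonneg_nonneg) auto
    have q: "(a0 * b1) * (a1 * b0) \<le> (c0 * d1) * w"
    proof -
      have "(a0 * b1) * (a1 * b0) = (a0 * b0) * (a1 * b1)" by simp
      also have "\<dots> \<le> (c0 * d0) * (c1 * d1)"
        using h00 h11 nn by (intro mult_mono[OF h00 h11]) (auto intro: mult_nonneg_nonneg)
      also have "\<dots> = (c0 * d1) * w" unfolding w_def by simp
      finally show ?thesis .
    qed
    have "w * (a0 * b1 + a1 * b0) \<le> w * (w + c0 * d1)"
      using p q by (simp add: algebra_simps)
    then have "a0 * b1 + a1 * b0 \<le> w + c0 * d1"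
      using wp by (simp add: mult_le_cancel_left)
    then show ?thesis unfolding w_def by simp
  qed
  have "(a0 + a1) * (b0 + b1) = a0 * b0 + a1 * b1 + (a0 * b1 + a1 * b0)"
    by (simp add: algebra_simps)
  also have "\<dots> \<le> c0 * d0 + c1 * d1 + (c1 * d0 + c0 * d1)"
    using h00 h11 cross by linarith
  also have "\<dots> = (c0 + c1) * (d0 + d1)" by (simp add: algebra_simps)
  finally show ?thesis .
qed

lemma sum_Pow_insert:
  fixes f :: "'a set \<Rightarrow> real"
  assumes "finite S" "x \<notin> S"
  shows "(\<Sum>A\<in>Pow (insert x S). f A) = (\<Sum>A\<in>Pow S. f A + f (insert x A))"
proof -
  have d: "Pow S \<inter> insert x ` Pow S = {}" using assms(2) by auto
  have inj: "inj_on (insert x) (Pow S)"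
    using assms(2) unfolding inj_on_def by (metis PowD insert_ident subsetD)
  have "(\<Sum>A\<in>Pow (insert x S). f A) = (\<Sum>A\<in>Pow S. f A) + (\<Sum>A\<in>insert x ` Pow S. f A)"
    unfolding Pow_insert using d assms(1) by (simp add: sum.union_disjoint)
  also have "(\<Sum>A\<in>insert x ` Pow S. f A) = (\<Sum>A\<in>Pow S. f (insert x A))"
    using inj by (simp add: sum.reindex)
  finally show ?thesis by (simp add: sum.distrib)
qed

lemma AD:
  fixes \<alpha> \<beta> \<gamma> \<delta> :: "'a set \<Rightarrow> real"
  assumes "finite S"
    and "\<forall>A. A \<subseteq> S \<longrightarrow> \<alpha> A \<ge> 0 \<and> \<beta> A \<ge> 0 \<and> \<gamma> A \<ge> 0 \<and> \<delta> A \<ge> 0"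
    and "\<forall>A B. A \<subseteq> S \<longrightarrow> B \<subseteq> S \<longrightarrow> \<alpha> A * \<beta> B \<le> \<gamma> (A \<union> B) * \<delta> (A \<inter> B)"
  shows "(\<Sum>A\<in>Pow S. \<alpha> A) * (\<Sum>A\<in>Pow S. \<beta> A) \<le> (\<Sum>A\<in>Pow S. \<gamma> A) * (\<Sum>A\<in>Pow S. \<delta> A)"
  using assms
proof (induction S arbitrary: \<alpha> \<beta> \<gamma> \<delta> rule: finite_induct)
  case empty
  then show ?case by simp
next
  case (insert x S)
  define \<alpha>' where "\<alpha>' A = \<alpha> A + \<alpha> (insert x A)" for A
  define \<beta>' where "\<beta>' A = \<beta> A + \<beta> (insert x A)" for A
  define \<gamma>' where "\<gamma>' A = \<gamma> A + \<gamma> (insert x A)" for A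
  define \<delta>' where "\<delta>' A = \<delta> A + \<delta> (insert x A)" for A
  have nn: "\<alpha> A \<ge> 0 \<and> \<beta> A \<ge> 0 \<and> \<gamma> A \<ge> 0 \<and> \<delta> A \<ge> 0" if "A \<subseteq> insert x S" for A
    using insert.prems(1) that by blast
  have H: "\<alpha> A * \<beta> B \<le> \<gamma> (A \<union> B) * \<delta> (A \<inter> B)" if "A \<subseteq> insert x S" "B \<subseteq> insert x S" for A B
    using insert.prems(2) that by blast
  have nn': "\<alpha>' A \<ge> 0 \<and> \<beta>' A \<ge> 0 \<and> \<gamma>' A \<ge> 0 \<and> \<delta>' A \<ge> 0" if "A \<subseteq> S" for A
  proof -
    have "A \<subseteq> insert x S" "insert x A \<subseteq> insert x S" using that by auto
    then show ?thesis using nn unfolding \<alpha>'_def \<beta>'_def \<gamma>'_def \<delta>'_def by (meson add_nonneg_nonneg)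
  qed
  have H': "\<alpha>' A * \<beta>' B \<le> \<gamma>' (A \<union> B) * \<delta>' (A \<inter> B)" if AS: "A \<subseteq> S" and BS: "B \<subseteq> S" for A B
  proof -
    have xA: "x \<notin> A" and xB: "x \<notin> B" using AS BS insert.hyps(2) by auto
    have s: "A \<subseteq> insert x S" "B \<subseteq> insert x S" "insert x A \<subseteq> insert x S" "insert x B \<subseteq> insert x S"
      "A \<union> B \<subseteq> insert x S" "insert x (A \<union> B) \<subseteq> insert x S"
      "A \<inter> B \<subseteq> insert x S" "insert x (A \<inter> B) \<subseteq> insert x S" using AS BS by auto
    have e1: "A \<union> insert x B = insert x (A \<union> B)" "A \<inter> insert x B = A \<inter> B"
      using xA by auto
    have e2: "insert x A \<union> B = insert x (A \<union> B)" "insert x A \<inter> B = A \<inter> B"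
      using xB by auto
    have e3: "insert x A \<union> insert x B = insert x (A \<union> B)" "insert x A \<inter> insert x B = insert x (A \<inter> B)"
      by auto
    show ?thesis unfolding \<alpha>'_def \<beta>'_def \<gamma>'_def \<delta>'_def
      apply (rule four_aux)
      using nn[OF s(1)] nn[OF s(2)] nn[OF s(3)] nn[OF s(4)] nn[OF s(5)] nn[OF s(6)] nn[OF s(7)] nn[OF s(8)]
        apply (simp_all)
      using H[OF s(1) s(2)] H[OF s(1) s(4)] H[OF s(3) s(2)] H[OF s(3) s(4)] e1 e2 e3 by simp_all
  qed
  have IH: "(\<Sum>A\<in>Pow S. \<alpha>' A) * (\<Sum>A\<in>Pow S. \<beta>' A) \<le> (\<Sum>A\<in>Pow S. \<gamma>' A) * (\<Sum>A\<in>Pow S. \<delta>' A)"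
    using insert.IH nn' H' by blast
  show ?case using IH insert.hyps
    by (simp add: sum_Pow_insert \<alpha>'_def \<beta>'_def \<gamma>'_def \<delta>'_def)
qed

theorem theorem2p2:
  fixes n :: nat and \<alpha> \<beta> \<gamma> \<delta> :: "nat set \<Rightarrow> real"
  assumes "n \<ge> 1"
    and "\<And>A. A \<subseteq> {1..n} \<Longrightarrow> \<alpha> A \<ge> 0"
    and "\<And>A. A \<subseteq> {1..n} \<Longrightarrow> \<beta> A \<ge> 0"
    and "\<And>A. A \<subseteq> {1..n} \<Longrightarrow> \<gamma> A \<ge> 0"
    and "\<And>A. A \<subseteq> {1..n} \<Longrightarrow> \<delta> A \<ge> 0"
    and "\<And>A B. A \<subseteq> {1..n} \<Longrightarrow> B \<subseteq> {1..n} \<Longrightarrow>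
           \<alpha> A * \<beta> B \<le> \<gamma> (A \<union> B) * \<delta> (A \<inter> B)"
  shows "(\<Sum>A\<in>Pow {1..n}. \<alpha> A * \<beta> ({1..n} - A))
           \<le> (\<Sum>C\<in>Pow {1..n}. \<gamma> C * \<delta> ({1..n} - C))"
proof -
  define S where "S = {1..n::nat}"
  define u where "u A = \<alpha> A * \<beta> (S - A)" for A
  define u' where "u' A = u (S - A)" for A
  define v where "v A = \<gamma> A * \<delta> (S - A)" for A
  define v' where "v' A = v (S - A)" for A
  have fin: "finite S" unfolding S_def by simp
  have nn: "u A \<ge> 0 \<and> u' A \<ge> 0 \<and> v A \<ge> 0 \<and> v' A \<ge> 0" if "A \<subseteq> S" for A
  proof -
    have s: "A \<subseteq> {1..n}" "S - A \<subseteq> {1..n}" using that S_def by auto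
    show ?thesis unfolding u'_def v'_def u_def v_def
      using assms(2-5)[OF s(1)] assms(2-5)[OF s(2)] assms(2-5)[of "S - (S - A)"] S_def
      by (auto intro!: mult_nonneg_nonneg)
  qed
  have H: "u A * u' B \<le> v (A \<union> B) * v' (A \<inter> B)" if AS: "A \<subseteq> S" and BS: "B \<subseteq> S" for A B
  proof -
    have SSB: "S - (S - B) = B" using BS by auto
    have SSAB: "S - (S - (A \<inter> B)) = A \<inter> B" using AS by auto
    have h1: "\<alpha> A * \<beta> B \<le> \<gamma> (A \<union> B) * \<delta> (A \<inter> B)"
      using assms(6) AS BS S_def by simp
    have h2: "\<alpha> (S - B) * \<beta> (S - A) \<le> \<gamma> (S - (A \<inter> B)) * \<delta> (S - (A \<union> B))"
    proof -
      have "\<alpha> (S - B) * \<beta> (S - A) \<le> \<gamma> ((S - B) \<union> (S - A)) * \<delta> ((S - B) \<inter> (S - A))"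
        using assms(6)[of "S - B" "S - A"] S_def by auto
      moreover have "(S - B) \<union> (S - A) = S - (A \<inter> B)" "(S - B) \<inter> (S - A) = S - (A \<union> B)" by auto
      ultimately show ?thesis by simp
    qed
    have "u A * u' B = (\<alpha> A * \<beta> B) * (\<alpha> (S - B) * \<beta> (S - A))"
      unfolding u_def u'_def SSB by simp
    also have "\<dots> \<le> (\<gamma> (A \<union> B) * \<delta> (A \<inter> B)) * (\<gamma> (S - (A \<inter> B)) * \<delta> (S - (A \<union> B)))"
      apply (rule mult_mono[OF h1 h2])
      using assms(2-5)[of "A \<inter> B"] assms(2-5)[of "A \<union> B"] assms(2-5)[of "S - B"] assms(2-5)[of "S - A"]
        assms(2-5)[of "A"] assms(2-5)[of "B"] AS BS S_def by (auto intro!: mult_nonneg_nonneg)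
    also have "\<dots> = v (A \<union> B) * v' (A \<inter> B)"
      unfolding v_def v'_def SSAB by simp
    finally show ?thesis .
  qed
  have AD': "(\<Sum>A\<in>Pow S. u A) * (\<Sum>A\<in>Pow S. u' A) \<le> (\<Sum>A\<in>Pow S. v A) * (\<Sum>A\<in>Pow S. v' A)"
    by (rule AD[OF fin]) (use nn H in auto)
  have bij: "bij_betw (\<lambda>A. S - A) (Pow S) (Pow S)"
    by (rule bij_betw_byWitness[where f'="\<lambda>A. S - A"]) auto
  have su: "(\<Sum>A\<in>Pow S. u' A) = (\<Sum>A\<in>Pow S. u A)"
    unfolding u'_def by (rule sum.reindex_bij_betw[OF bij])
  have sv: "(\<Sum>A\<in>Pow S. v' A) = (\<Sum>A\<in>Pow S. v A)"
    unfolding v'_def by (rule sum.reindex_bij_betw[OF bij])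
  have "(\<Sum>A\<in>Pow S. u A)^2 \<le> (\<Sum>A\<in>Pow S. v A)^2"
    using AD' su sv by (simp add: power2_eq_square)
  moreover have "(\<Sum>A\<in>Pow S. v A) \<ge> 0" using nn by (intro sum_nonneg) auto
  ultimately have "(\<Sum>A\<in>Pow S. u A) \<le> (\<Sum>A\<in>Pow S. v A)"
    using power2_le_imp_le by blast
  then show ?thesis unfolding u_def v_def S_def .
qed

end
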